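(* Let $k\ge5$ and $n\ge k^3$ be integers. Let $f^*(n,k)$ denote the maximum of $\min\{|\mathcal A|,|\mathcal B|\}$ over all pairs $\mathcal A,\mathcal B\subset\binom{[n]}{k}$ such that $\mathcal A\cap\mathcal B=\emptyset$, $\mathcal A$ and $\mathcal B$ are cross-intersecting, and neither $\mathcal A$ nor $\mathcal B$ is a star. Then $$f^*(n,k)=\left\lfloor\frac12\left(\binom{n-1}{n-k}-\binom{n-2k}{k-1}\right)\right\rfloor+1.$$
   Context: $[n]=\{1,\dots,n\}$ and $\binom{[n]}{k}$ is the collection of all $k$-element subsets of $[n]$. Families $\mathcal A,\mathcal B$ are cross-intersecting if $A\cap B\neq\emptyset$ for all $A\in\mathcal A$, $B\in\mathcal B$. A family $\mathcal F$ is a star if there is $x\in[n]$ with $x\in F$ for all $F\in\mathcal F$. *)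

theory Defs
  imports Complex_Main
begin

definition ksets :: "nat \<Rightarrow> nat \<Rightarrow> nat set set" where
  "ksets n k = {F. F \<subseteq> {1..n} \<and> card F = k}"

definition cross_intersecting :: "'a set set \<Rightarrow> 'a set set \<Rightarrow> bool" where
  "cross_intersecting A B \<longleftrightarrow> (\<forall>X\<in>A. \<forall>Y\<in>B. X \<inter> Y \<noteq> {})"

definition is_star :: "nat \<Rightarrow> nat set set \<Rightarrow> bool" where
  "is_star n F \<longleftrightarrow> (\<exists>x\<in>{1..n}. \<forall>X\<in>F. x \<in> X)"

definition f_star :: "nat \<Rightarrow> nat \<Rightarrow> nat" where
  "f_star n k = Max {min (card A) (card B) | A B.
      A \<subseteq> ksets n k \<and> B \<subseteq> ksets n k \<and> A \<inter> B = {} \<and>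
      cross_intersecting A B \<and> \<not> is_star n A \<and> \<not> is_star n B}"

end

theory Submission
  imports Defs
begin

lemma count_TV:
  assumes T: "T \<subseteq> {1..n}" and V: "V \<subseteq> {1..n}" and TV: "T \<inter> V = {}" and Tk: "card T \<le> k"
  shows "card {S \<in> ksets n k. T \<subseteq> S \<and> S \<inter> V = {}} = (n - card T - card V) choose (k - card T)"
proof -
  let ?W = "{1..n} - T - V"
  have fT: "finite T" using T finite_subset by blast
  have fV: "finite V" using V finite_subset by blast
  have cW: "card ?W = n - card T - card V"
  proof -
    have "card ?W = card ({1..n} - (T \<union> V))" by (simp add: Diff_eq Int_assoc)
    also have "\<dots> = n - card (T \<union> V)" using T V by (subst card_Diff_subset) (auto intro: finite_subset)
    also have "card (T \<union> V) = card T + card V" using TV fT fV by (simp add: card_Un_disjoint)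
    finally show ?thesis by simp
  qed
  have eq: "{S \<in> ksets n k. T \<subseteq> S \<and> S \<inter> V = {}} = (\<lambda>S'. S' \<union> T) ` {S'. S' \<subseteq> ?W \<and> card S' = k - card T}"
  proof (rule set_eqI, rule iffI)
    fix S assume "S \<in> {S \<in> ksets n k. T \<subseteq> S \<and> S \<inter> V = {}}"
    then have S: "S \<subseteq> {1..n}" "card S = k" "T \<subseteq> S" "S \<inter> V = {}" by (auto simp: ksets_def)
    have fS: "finite S" using S(1) finite_subset by blast
    have "S = (S - T) \<union> T" using S by auto
    moreover have "card (S - T) = k - card T" using S fS by (simp add: card_Diff_subset fT)
    moreover have "S - T \<subseteq> ?W" using S by auto
    ultimately show "S \<in> (\<lambda>S'. S' \<union> T) ` {S'. S' \<subseteq> ?W \<and> card S' = k - card T}" by blast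
  next
    fix S assume "S \<in> (\<lambda>S'. S' \<union> T) ` {S'. S' \<subseteq> ?W \<and> card S' = k - card T}"
    then obtain S' where S': "S' \<subseteq> ?W" "card S' = k - card T" "S = S' \<union> T" by blast
    have fS': "finite S'" using S'(1) finite_subset by blast
    have dj: "S' \<inter> T = {}" using S'(1) by blast
    have "card S = card S' + card T" using S'(3) fS' fT dj by (simp add: card_Un_disjoint)
    then have "card S = k" using S' Tk by simp
    then show "S \<in> {S \<in> ksets n k. T \<subseteq> S \<and> S \<inter> V = {}}" using S' T TV by (auto simp: ksets_def)
  qed
  have inj: "inj_on (\<lambda>S'. S' \<union> T) {S'. S' \<subseteq> ?W \<and> card S' = k - card T}"
    by (rule inj_onI) blast
  show ?thesis unfolding eq card_image[OF inj] n_subsets[OF finite_Diff[OF finite_Diff[OF finite_atLeastAtMost]]] cW ..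
qed

definition Mt :: "nat \<Rightarrow> nat \<Rightarrow> nat \<Rightarrow> nat" where
  "Mt n k w = (\<Sum>i<w. ((n - 2 - i) choose (k - 2)))"

definition meets :: "nat \<Rightarrow> nat \<Rightarrow> nat \<Rightarrow> nat set \<Rightarrow> nat set set" where
  "meets n k x W = {S \<in> ksets n k. x \<in> S \<and> S \<inter> W \<noteq> {}}"

lemma finite_ksets: "finite (ksets n k)"
proof -
  have "ksets n k \<subseteq> Pow {1..n}" by (auto simp: ksets_def)
  then show ?thesis by (rule finite_subset) simp
qed

lemma finite_sub_ksets: "F \<subseteq> ksets n k \<Longrightarrow> finite F"
  using finite_ksets finite_subset by blast

lemma Mt_Suc: "Mt n k (Suc w) = Mt n k w + ((n - 2 - w) choose (k - 2))"
  by (simp add: Mt_def)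

lemma card_meets:
  assumes W: "W \<subseteq> {1..n}" and x: "x \<in> {1..n}" "x \<notin> W" and k: "k \<ge> 2"
  shows "card (meets n k x W) = Mt n k (card W)"
proof -
  have fW: "finite W" using W finite_subset by blast
  show ?thesis using fW W x
  proof (induction W rule: finite_induct)
    case empty
    then show ?case by (simp add: meets_def Mt_def)
  next
    case (insert w W)
    have eq: "meets n k x (insert w W) = meets n k x W \<union> {S \<in> ksets n k. {x,w} \<subseteq> S \<and> S \<inter> W = {}}"
      by (auto simp: meets_def)
    have dj: "meets n k x W \<inter> {S \<in> ksets n k. {x,w} \<subseteq> S \<and> S \<inter> W = {}} = {}"
      by (auto simp: meets_def)
    have c2: "card {x,w} = 2" using insert by auto
    have cnt: "card {S \<in> ksets n k. {x,w} \<subseteq> S \<and> S \<inter> W = {}} = ((n - 2 - card W) choose (k - 2))"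
      using count_TV[of "{x,w}" n W k] insert k c2 by auto
    have "card (meets n k x (insert w W)) = card (meets n k x W) + ((n - 2 - card W) choose (k - 2))"
      unfolding eq using dj cnt by (subst card_Un_disjoint) (auto simp: meets_def intro: finite_subset[OF _ finite_ksets])
    also have "card (meets n k x W) = Mt n k (card W)" using insert by auto
    finally show ?case using insert by (simp add: Mt_Suc)
  qed
qed

lemma count_3:
  assumes "x \<in> {1..n}" "u \<in> {1..n}" "v \<in> {1..n}" "x \<noteq> u" "x \<noteq> v" "u \<noteq> v" "k \<ge> 3"
  shows "card {S \<in> ksets n k. {x,u,v} \<subseteq> S} = ((n - 3) choose (k - 3))"
proof -
  have c3: "card {x,u,v} = 3" using assms by auto
  have "card {S \<in> ksets n k. {x,u,v} \<subseteq> S \<and> S \<inter> {} = {}} = ((n - 3 - 0) choose (k - 3))"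
    using count_TV[of "{x,u,v}" n "{}" k] assms c3 by auto
  then show ?thesis by simp
qed

lemma hockey:
  assumes "w + 1 \<le> n" "k \<ge> 2"
  shows "((n - 1) choose (k - 1)) = ((n - 1 - w) choose (k - 1)) + Mt n k w"
  using assms
proof (induction w)
  case 0
  then show ?case by (simp add: Mt_def)
next
  case (Suc w)
  have a: "n - 1 - w = Suc (n - 2 - w)" using Suc by linarith
  have b: "k - 1 = Suc (k - 2)" using Suc by linarith
  have "((n - 1 - w) choose (k - 1)) = ((n - 2 - w) choose (k - 1)) + ((n - 2 - w) choose (k - 2))"
    unfolding a b by simp
  moreover have "n - 2 - w = n - 1 - Suc w" by simp
  ultimately show ?case using Suc by (simp add: Mt_Suc b)
qed

lemma g_lb:
  assumes "i + j + 2 \<le> n" "k \<ge> 3"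
  shows "((n - 2 - i) choose (k - 2)) \<le> ((n - 2 - (i + j)) choose (k - 2)) + j * ((n - 3) choose (k - 3))"
  using assms
proof (induction j)
  case 0
  then show ?case by simp
next
  case (Suc j)
  have a: "n - 2 - (i + j) = Suc (n - 3 - (i + j))" using Suc by linarith
  have b: "k - 2 = Suc (k - 3)" using Suc by linarith
  have e: "((n - 2 - (i + j)) choose (k - 2)) = ((n - 3 - (i + j)) choose (k - 2)) + ((n - 3 - (i + j)) choose (k - 3))"
    unfolding a b by simp
  have m: "((n - 3 - (i + j)) choose (k - 3)) \<le> ((n - 3) choose (k - 3))"
    by (rule binomial_right_mono) simp
  have "n - 3 - (i + j) = n - 2 - (i + Suc j)" by simp
  then show ?case using Suc e m by simp
qed

lemma absorb:
  assumes "k \<ge> 3" "n \<ge> 3"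
  shows "(k - 2) * ((n - 2) choose (k - 2)) = (n - 2) * ((n - 3) choose (k - 3))"
proof -
  have "Suc (k - 3) * ((n - 2) choose Suc (k - 3)) = (n - 2) * ((n - 2 - 1) choose (k - 3))"
    by (rule binomial_absorption)
  moreover have "Suc (k - 3) = k - 2" using assms by simp
  moreover have "n - 2 - 1 = n - 3" by simp
  ultimately show ?thesis by simp
qed

lemma Mt_le: "Mt n k w \<le> w * ((n - 2) choose (k - 2))"
proof -
  have "Mt n k w \<le> (\<Sum>i<w. ((n - 2) choose (k - 2)))" unfolding Mt_def
    by (intro sum_mono binomial_right_mono) simp
  then show ?thesis by simp
qed

lemma Mt_mono: "v \<le> w \<Longrightarrow> Mt n k v \<le> Mt n k w"
  unfolding Mt_def by (intro sum_mono2) auto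

lemma Mt_lower:
  assumes "w + 2 \<le> n" "k \<ge> 3"
  shows "2 * w * ((n - 2) choose (k - 2)) \<le> 2 * Mt n k w + w * (w - 1) * ((n - 3) choose (k - 3))"
  using assms
proof (induction w)
  case 0
  then show ?case by (simp add: Mt_def)
next
  case (Suc w)
  define c where "c = ((n - 2) choose (k - 2))"
  define d where "d = ((n - 3) choose (k - 3))"
  define gw where "gw = ((n - 2 - w) choose (k - 2))"
  have g: "c \<le> gw + w * d"
    using g_lb[of 0 w n k] Suc unfolding c_def d_def gw_def by simp
  have IH: "2 * w * c \<le> 2 * Mt n k w + w * (w - 1) * d" using Suc unfolding c_def d_def by simp
  have M: "Mt n k (Suc w) = Mt n k w + gw" unfolding gw_def by (rule Mt_Suc)
  have e: "Suc w * (Suc w - 1) * d = w * (w - 1) * d + 2 * (w * d)" by (cases w) (auto simp: algebra_simps)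
  have e2: "2 * Suc w * c = 2 * w * c + 2 * c" by simp
  define P where "P = w * c"
  define Q where "Q = w * d"
  define W where "W = w * (w - 1) * d"
  have e3: "2 * w * c = 2 * P" unfolding P_def by simp
  have "2 * Suc w * c \<le> 2 * Mt n k (Suc w) + Suc w * (Suc w - 1) * d"
    unfolding e e2 M e3 W_def[symmetric] Q_def[symmetric] using g IH unfolding e3 W_def[symmetric] Q_def[symmetric] by (simp add: algebra_simps)
  then show ?case unfolding c_def d_def .
qed

lemma Mt_add: "Mt n k (a + b) = Mt n k a + (\<Sum>i<b. ((n - 2 - (a + i)) choose (k - 2)))"
  by (induction b) (simp_all add: Mt_def)

lemma Mt_double:
  assumes "2 * k + 2 \<le> n" "k \<ge> 3"
  shows "2 * Mt n k (k - 1) + ((n - 2) choose (k - 2)) \<le> Mt n k (2 * k - 1) + (k * k - 1) * ((n - 3) choose (k - 3))"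
proof -
  let ?g = "\<lambda>i. ((n - 2 - i) choose (k - 2))"
  let ?d = "((n - 3) choose (k - 3))"
  have s: "2 * k - 1 = k + (k - 1)" using assms by simp
  have A: "Mt n k (2 * k - 1) = Mt n k k + (\<Sum>i<k - 1. ?g (k + i))" unfolding s Mt_add by simp
  have B: "Mt n k k = Mt n k (k - 1) + ?g (k - 1)" using Mt_Suc[of n k "k - 1"] assms by simp
  have C: "?g 0 \<le> ?g (k - 1) + (k - 1) * ?d" using g_lb[of 0 "k - 1" n k] assms by simp
  have D: "Mt n k (k - 1) \<le> (\<Sum>i<k - 1. ?g (k + i)) + (k - 1) * (k * ?d)"
  proof -
    have "Mt n k (k - 1) \<le> (\<Sum>i<k - 1. ?g (k + i) + k * ?d)" unfolding Mt_def
    proof (rule sum_mono)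
      fix i assume "i \<in> {..<k - 1}"
      then show "?g i \<le> ?g (k + i) + k * ?d" using g_lb[of i k n k] assms by (simp add: add.commute)
    qed
    then show ?thesis by (simp add: sum.distrib)
  qed
  have E: "(k * k - 1) * ?d = (k - 1) * ?d + (k - 1) * (k * ?d)"
  proof -
    have "k * k - 1 = (k - 1) + (k - 1) * k" using assms by (cases k) (auto simp: algebra_simps)
    then show ?thesis by (simp add: algebra_simps)
  qed
  define G where "G = ?g (k - 1)"
  define SS where "SS = (\<Sum>i<k - 1. ?g (k + i))"
  define c where "c = ((n - 2) choose (k - 2))"
  define U1 where "U1 = (k - 1) * ?d"
  define U2 where "U2 = (k - 1) * (k * ?d)"
  have C': "c \<le> G + U1" using C unfolding c_def G_def U1_def by simp
  show ?thesis unfolding E c_def[symmetric] U1_def[symmetric] U2_def[symmetric]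
    using A B C' D unfolding G_def[symmetric] SS_def[symmetric] U2_def[symmetric] by linarith
qed

definition cov :: "nat \<Rightarrow> nat \<Rightarrow> nat \<Rightarrow> nat set set \<Rightarrow> nat set set" where
  "cov n k x P = {S \<in> ksets n k. x \<in> S \<and> (\<forall>F\<in>P. S \<inter> F \<noteq> {})}"

lemma ksetsD: "S \<in> ksets n k \<Longrightarrow> S \<subseteq> {1..n} \<and> card S = k \<and> finite S"
  by (auto simp: ksets_def intro: finite_subset)

lemma card_3sets_le:
  assumes "x \<in> {1..n}" "u \<in> {1..n}" "v \<in> {1..n}" "x \<noteq> u" "x \<noteq> v" "u \<noteq> v" "k \<ge> 3"
  shows "card {S \<in> ksets n k. {x,u,v} \<subseteq> S} \<le> ((n - 3) choose (k - 3))"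
  using count_3[OF assms] by simp

lemma E_bound:
  assumes P: "P \<noteq> {}" "P \<subseteq> ksets n k" "\<forall>F\<in>P. x \<notin> F" and x: "x \<in> {1..n}" and k: "k \<ge> 3"
  shows "\<exists>E. cov n k x P \<subseteq> meets n k x (\<Inter>P) \<union> E \<and> finite E \<and>
     card E \<le> (k - card (\<Inter>P)) * (k - card (\<Inter>P)) * ((n - 3) choose (k - 3))"
proof -
  let ?R = "\<Inter>P"
  let ?d = "((n - 3) choose (k - 3))"
  obtain P1 where P1: "P1 \<in> P" using P by blast
  define G where "G u = (SOME F. F \<in> P \<and> u \<notin> F)" for u
  have G: "G u \<in> P \<and> u \<notin> G u" if "u \<in> P1 - ?R" for u
  proof -
    have "\<exists>F. F \<in> P \<and> u \<notin> F" using that by blast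
    then show ?thesis unfolding G_def by (rule someI_ex)
  qed
  define E where "E = (\<Union>u\<in>P1 - ?R. \<Union>v\<in>G u - ?R. {S \<in> ksets n k. {x,u,v} \<subseteq> S})"
  have sub: "cov n k x P \<subseteq> meets n k x ?R \<union> E"
  proof
    fix S assume S: "S \<in> cov n k x P"
    show "S \<in> meets n k x ?R \<union> E"
    proof (cases "S \<inter> ?R = {}")
      case False
      then show ?thesis using S by (auto simp: cov_def meets_def)
    next
      case True
      from S P1 obtain u where u: "u \<in> S" "u \<in> P1" by (auto simp: cov_def)
      have uR: "u \<in> P1 - ?R" using u True by blast
      from S G[OF uR] obtain v where v: "v \<in> S" "v \<in> G u" by (auto simp: cov_def)
      have vR: "v \<in> G u - ?R" using v True by blast
      have "S \<in> {S \<in> ksets n k. {x,u,v} \<subseteq> S}" using S u v by (auto simp: cov_def)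
      then show ?thesis unfolding E_def using uR vR by blast
    qed
  qed
  have RP1: "?R \<subseteq> P1" using P1 by blast
  have fR: "finite ?R" using RP1 ksetsD[of P1 n k] P1 P(2) finite_subset by blast
  have cP1: "card (P1 - ?R) = k - card ?R"
    using RP1 ksetsD[of P1 n k] P1 P(2) by (simp add: card_Diff_subset fR subset_iff)
  have cG: "card (G u - ?R) = k - card ?R" if "u \<in> P1 - ?R" for u
  proof -
    have "G u \<in> P" using G[OF that] by blast
    then have "?R \<subseteq> G u" "G u \<in> ksets n k" using P(2) by blast+
    then show ?thesis using ksetsD[of "G u" n k] by (simp add: card_Diff_subset fR)
  qed
  have fP1: "finite (P1 - ?R)" using ksetsD[of P1 n k] P1 P(2) by blast
  have fG: "finite (G u - ?R)" if "u \<in> P1 - ?R" for u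
    using G[OF that] P(2) ksetsD[of "G u" n k] by blast
  have cardE: "card E \<le> (\<Sum>u\<in>P1 - ?R. \<Sum>v\<in>G u - ?R. card {S \<in> ksets n k. {x,u,v} \<subseteq> S})"
    unfolding E_def
    by (rule order_trans[OF card_UN_le[OF fP1]], rule sum_mono, rule card_UN_le, rule fG)
  also have "\<dots> \<le> (\<Sum>u\<in>P1 - ?R. \<Sum>v\<in>G u - ?R. ?d)"
  proof (rule sum_mono, rule sum_mono)
    fix u v assume u: "u \<in> P1 - ?R" and v: "v \<in> G u - ?R"
    have Gu: "G u \<in> P" "u \<notin> G u" using G[OF u] by auto
    have "u \<in> {1..n}" using u P1 P(2) ksetsD[of P1 n k] by blast
    moreover have "v \<in> {1..n}" using v Gu P(2) ksetsD[of "G u" n k] by blast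
    moreover have "x \<noteq> u" using u P1 P(3) by blast
    moreover have "x \<noteq> v" using v Gu P(3) by blast
    moreover have "u \<noteq> v" using v Gu by blast
    ultimately show "card {S \<in> ksets n k. {x,u,v} \<subseteq> S} \<le> ?d" using card_3sets_le x k by blast
  qed
  also have "\<dots> = (\<Sum>u\<in>P1 - ?R. (k - card ?R) * ?d)"
    by (rule sum.cong) (auto simp: cG)
  also have "\<dots> = (k - card ?R) * (k - card ?R) * ?d" using cP1 by simp
  finally have "card E \<le> (k - card ?R) * (k - card ?R) * ?d" .
  moreover have "finite E" unfolding E_def using fP1 fG
    by (intro finite_UN_I) (auto intro: finite_subset[OF _ finite_ksets])
  ultimately show ?thesis using sub by blast
qed

lemma core_le_k:
  assumes "P \<noteq> {}" "P \<subseteq> ksets n k"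
  shows "card (\<Inter>P) \<le> k"
proof -
  obtain P1 where P1: "P1 \<in> P" using assms by blast
  then have "\<Inter>P \<subseteq> P1" by blast
  then show ?thesis using ksetsD[of P1 n k] P1 assms card_mono by fastforce
qed

lemma core_card:
  assumes P: "P \<noteq> {}" "P \<subseteq> ksets n k" "\<forall>F\<in>P. x \<notin> F" and x: "x \<in> {1..n}"
  shows "card P \<le> ((n - card (\<Inter>P) - 1) choose (k - card (\<Inter>P)))"
proof -
  obtain P1 where P1: "P1 \<in> P" using assms by blast
  have R: "\<Inter>P \<subseteq> {1..n}" using P1 P ksetsD[of P1 n k] by blast
  have xR: "\<Inter>P \<inter> {x} = {}" using P1 P by blast
  have "P \<subseteq> {S \<in> ksets n k. \<Inter>P \<subseteq> S \<and> S \<inter> {x} = {}}" using P by blast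
  then have "card P \<le> card {S \<in> ksets n k. \<Inter>P \<subseteq> S \<and> S \<inter> {x} = {}}"
    by (rule card_mono[rotated]) (auto intro: finite_subset[OF _ finite_ksets])
  also have "\<dots> = ((n - card (\<Inter>P) - card {x}) choose (k - card (\<Inter>P)))"
    by (rule count_TV) (use R x xR core_le_k[OF P(1,2)] in auto)
  finally show ?thesis by simp
qed

lemma card_cov:
  assumes P: "P \<noteq> {}" "P \<subseteq> ksets n k" "\<forall>F\<in>P. x \<notin> F" and x: "x \<in> {1..n}" and k: "k \<ge> 3"
  shows "card (cov n k x P) \<le> Mt n k (card (\<Inter>P)) + (k - card (\<Inter>P)) * (k - card (\<Inter>P)) * ((n - 3) choose (k - 3))"
proof -
  obtain E where E: "cov n k x P \<subseteq> meets n k x (\<Inter>P) \<union> E" "finite E"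
     "card E \<le> (k - card (\<Inter>P)) * (k - card (\<Inter>P)) * ((n - 3) choose (k - 3))"
    using E_bound[OF assms] by blast
  obtain P1 where P1: "P1 \<in> P" using assms by blast
  have R: "\<Inter>P \<subseteq> {1..n}" using P1 P ksetsD[of P1 n k] by blast
  have xR: "x \<notin> \<Inter>P" using P1 P by blast
  have fm: "finite (meets n k x (\<Inter>P))" unfolding meets_def by (auto intro: finite_subset[OF _ finite_ksets])
  have "card (cov n k x P) \<le> card (meets n k x (\<Inter>P) \<union> E)"
    using E fm by (intro card_mono) auto
  also have "\<dots> \<le> card (meets n k x (\<Inter>P)) + card E" by (rule card_Un_le)
  also have "card (meets n k x (\<Inter>P)) = Mt n k (card (\<Inter>P))"
    using card_meets[OF R x xR] k by simp
  finally show ?thesis using E(3) by simp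
qed

lemma tau3:
  assumes A: "A \<subseteq> ksets n k" "A \<noteq> {}" and nc: "\<forall>a b. \<exists>F\<in>A. a \<notin> F \<and> b \<notin> F"
    and B: "B \<subseteq> ksets n k" and ci: "cross_intersecting A B" and k: "k \<ge> 3"
  shows "card B \<le> k * k * k * ((n - 3) choose (k - 3))"
proof -
  let ?d = "((n - 3) choose (k - 3))"
  obtain F1 where F1: "F1 \<in> A" using A by blast
  define G where "G a = (SOME F. F \<in> A \<and> a \<notin> F)" for a
  define H where "H a b = (SOME F. F \<in> A \<and> a \<notin> F \<and> b \<notin> F)" for a b
  have G: "G a \<in> A \<and> a \<notin> G a" for a
  proof -
    have "\<exists>F. F \<in> A \<and> a \<notin> F" using nc by blast
    then show ?thesis unfolding G_def by (rule someI_ex)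
  qed
  have H: "H a b \<in> A \<and> a \<notin> H a b \<and> b \<notin> H a b" for a b
  proof -
    have "\<exists>F. F \<in> A \<and> a \<notin> F \<and> b \<notin> F" using nc by blast
    then show ?thesis unfolding H_def by (rule someI_ex)
  qed
  have fin: "finite F" "card F = k" "F \<subseteq> {1..n}" if "F \<in> A" for F using that A ksetsD by blast+
  define E where "E = (\<Union>a\<in>F1. \<Union>b\<in>G a. \<Union>c\<in>H a b. {S \<in> ksets n k. {a,b,c} \<subseteq> S})"
  have "B \<subseteq> E"
  proof
    fix S assume S: "S \<in> B"
    have "\<forall>F\<in>A. S \<inter> F \<noteq> {}" using ci S unfolding cross_intersecting_def by blast
    then obtain a where a: "a \<in> S" "a \<in> F1" using F1 by blast
    obtain b where b: "b \<in> S" "b \<in> G a" using G[of a] \<open>\<forall>F\<in>A. S \<inter> F \<noteq> {}\<close> by blast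
    obtain c where c: "c \<in> S" "c \<in> H a b" using H[of a b] \<open>\<forall>F\<in>A. S \<inter> F \<noteq> {}\<close> by blast
    show "S \<in> E" unfolding E_def using a b c S B by blast
  qed
  then have "card B \<le> card E" by (rule card_mono[rotated]) (auto simp: E_def intro: finite_subset[OF _ finite_ksets] fin G H F1)
  also have "\<dots> \<le> (\<Sum>a\<in>F1. \<Sum>b\<in>G a. \<Sum>c\<in>H a b. card {S \<in> ksets n k. {a,b,c} \<subseteq> S})"
    unfolding E_def
    by (rule order_trans[OF card_UN_le], simp add: fin F1, rule sum_mono,
        rule order_trans[OF card_UN_le], simp add: fin G, rule sum_mono,
        rule card_UN_le, simp add: fin H)
  also have "\<dots> \<le> (\<Sum>a\<in>F1. \<Sum>b\<in>G a. \<Sum>c\<in>H a b. ?d)"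
  proof (intro sum_mono)
    fix a b c assume abc: "a \<in> F1" "b \<in> G a" "c \<in> H a b"
    have "a \<in> {1..n}" "b \<in> {1..n}" "c \<in> {1..n}" using abc fin F1 G H by blast+
    moreover have "a \<noteq> b" "a \<noteq> c" "b \<noteq> c" using abc G[of a] H[of a b] by auto
    ultimately show "card {S \<in> ksets n k. {a,b,c} \<subseteq> S} \<le> ?d" using card_3sets_le k by blast
  qed
  also have "\<dots> = k * k * k * ?d" using fin F1 G H by simp
  finally show ?thesis .
qed

lemma numI1:
  fixes c d X h k :: real
  assumes k: "k \<ge> 5" and cd: "c \<ge> (k^2 + 2*k + 4) * d" and d: "d \<ge> 1"
    and X: "2 * X + (2*k - 1) * (2*k - 2) * d \<ge> 2 * (2*k - 1) * c" and h: "X + 3 \<le> 2 * h"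
  shows "k^3 * d < h"
proof -
  have m: "2*(2*k-1)*c \<ge> 2*(2*k-1)*((k^2 + 2*k + 4) * d)"
    using cd k by (intro mult_left_mono) auto
  have k2: "k^2 \<ge> 25" using power_mono[of 5 k 2] k by simp
  have p0: "2*k^2 + 18*k - 10 \<ge> 0" using k k2 by linarith
  have p: "(2*k^2 + 18*k - 10) * d \<ge> 0" using p0 d by simp
  show ?thesis using m p X h d by (simp add: algebra_simps power2_eq_square power3_eq_cube) 
qed


lemma numI2:
  fixes c d X h k :: real
  assumes k: "k \<ge> 5" and cd: "c \<ge> (k^2 + 2*k + 4) * d" and d: "d \<ge> 1"
    and X: "2 * X + (2*k - 1) * (2*k - 2) * d \<ge> 2 * (2*k - 1) * c" and h: "X + 3 \<le> 2 * h"
  shows "2 * (c + k^2 * d) < h"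
proof -
  have m: "(4*k-10)*c \<ge> (4*k-10)*((k^2 + 2*k + 4) * d)"
    using cd k by (intro mult_left_mono) auto
  have k2: "k^2 \<ge> 25" using power_mono[of 5 k 2] k by simp
  have k3: "k^3 \<ge> 5 * k^2" using mult_right_mono[of 5 k "k^2"] k by (simp add: power2_eq_square power3_eq_cube)
  have p0: "4*k^3 - 14*k^2 + 2*k - 42 \<ge> 0" using k k2 k3 by linarith
  have p: "(4*k^3 - 14*k^2 + 2*k - 42) * d \<ge> 0" using p0 d by simp
  show ?thesis using m p X h d by (simp add: algebra_simps power2_eq_square power3_eq_cube)
qed

lemma numIb:
  fixes c d X h k :: real
  assumes k: "k \<ge> 5" and cd: "c \<ge> (k^2 + 2*k + 4) * d" and d: "d \<ge> 1"
    and X: "2 * X + (2*k - 1) * (2*k - 2) * d \<ge> 2 * (2*k - 1) * c" and h: "X + 3 \<le> 2 * h"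
  shows "3 * c + (k - 2)^2 * d < h"
proof -
  have m: "(4*k-14)*c \<ge> (4*k-14)*((k^2 + 2*k + 4) * d)"
    using cd k by (intro mult_left_mono) auto
  have k2: "k^2 \<ge> 25" using power_mono[of 5 k 2] k by simp
  have k3: "k^3 \<ge> 5 * k^2" using mult_right_mono[of 5 k "k^2"] k by (simp add: power2_eq_square power3_eq_cube)
  have p0: "4*k^3 - 14*k^2 + 10*k - 74 \<ge> 0" using k k2 k3 by linarith
  have p: "(4*k^3 - 14*k^2 + 10*k - 74) * d \<ge> 0" using p0 d by simp
  show ?thesis using m p X h d by (simp add: algebra_simps power2_eq_square power3_eq_cube)
qed

lemma numIc:
  fixes c d X h k t :: real
  assumes k: "k \<ge> 5" and cd: "c \<ge> (k^2 + 2*k + 4) * d" and d: "d \<ge> 1"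
    and X: "2 * X + (2*k - 1) * (2*k - 2) * d \<ge> 2 * (2*k - 1) * c" and h: "X + 3 \<le> 2 * h"
    and t: "2 \<le> t" "t \<le> k"
  shows "(k - t) * c + t^2 * d + d < h"
proof -
  have m: "(4*t-2)*c \<ge> (4*t-2)*((k^2 + 2*k + 4) * d)"
    using cd t by (intro mult_left_mono) auto
  have tt: "t^2 * d \<le> k * t * d" unfolding power2_eq_square using t d by (intro mult_right_mono) auto
  have q0: "(4*(k^2+2*k+4) - 4*k) * d \<ge> 0" using k d by (intro mult_nonneg_nonneg) (auto simp: power2_eq_square)
  have q: "t * ((4*(k^2+2*k+4) - 4*k) * d) \<ge> 2 * ((4*(k^2+2*k+4) - 4*k) * d)"
    using q0 t by (intro mult_right_mono) auto
  have k2: "k^2 \<ge> 25" using power_mono[of 5 k 2] k by simp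
  have p: "(2*k^2 + 10*k + 18) * d \<ge> 0" using k k2 d by (intro mult_nonneg_nonneg) auto
  have g: "(k - t) * c + k * t * d + d < h" using m p X h d q by (simp add: algebra_simps power2_eq_square power3_eq_cube)
  show ?thesis using g tt by linarith
qed

lemma num_gamma:
  fixes c d k n :: real
  assumes k: "k \<ge> 5" and n: "n \<ge> k^3" and ab: "(k - 2) * c = (n - 2) * d" and d: "d \<ge> 0"
  shows "c \<ge> (k^2 + 2*k + 4) * d"
proof -
  have "(k - 2) * ((k^2 + 2*k + 4) * d) = (k^3 - 8) * d" by (simp add: algebra_simps power2_eq_square power3_eq_cube)
  also have "\<dots> \<le> (n - 2) * d" using n d by (intro mult_right_mono) auto
  also have "\<dots> = (k - 2) * c" using ab by simp
  finally show ?thesis using k by (simp add: mult_le_cancel_left)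
qed

lemma binom_shift_le:
  assumes "j \<le> b" "b \<le> a"
  shows "((a - j) choose (b - j)) \<le> (a choose b)"
  using assms
proof (induction j)
  case 0
  then show ?case by simp
next
  case (Suc j)
  have a: "a - j = Suc (a - Suc j)" using Suc by linarith
  have b: "b - j = Suc (b - Suc j)" using Suc by linarith
  have "((a - Suc j) choose (b - Suc j)) \<le> ((a - j) choose (b - j))" unfolding a b by simp
  then show ?case using Suc by linarith
qed

lemma core_c:
  assumes "2 \<le> s" "s \<le> k" "k \<le> n"
  shows "((n - s - 1) choose (k - s)) \<le> ((n - 2) choose (k - 2))"
proof -
  have "((n - s - 1) choose (k - s)) \<le> ((n - s) choose (k - s))" by (rule binomial_right_mono) simp
  also have "n - s = (n - 2) - (s - 2)" "k - s = (k - 2) - (s - 2)" using assms by auto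
  then have "((n - s) choose (k - s)) \<le> ((n - 2) choose (k - 2))" using binom_shift_le[of "s - 2" "k - 2" "n - 2"] assms by simp
  finally show ?thesis .
qed

lemma core_d:
  assumes "3 \<le> s" "s \<le> k" "k \<le> n"
  shows "((n - s - 1) choose (k - s)) \<le> ((n - 3) choose (k - 3))"
proof -
  have "((n - s - 1) choose (k - s)) \<le> ((n - s) choose (k - s))" by (rule binomial_right_mono) simp
  also have "n - s = (n - 3) - (s - 3)" "k - s = (k - 3) - (s - 3)" using assms by auto
  then have "((n - s) choose (k - s)) \<le> ((n - 3) choose (k - 3))" using binom_shift_le[of "s - 3" "k - 3" "n - 3"] assms by simp
  finally show ?thesis .
qed

lemma card_split:
  assumes "finite A"
  shows "card A = card {F\<in>A. x \<in> F} + card {F\<in>A. x \<notin> F}"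
proof -
  have "A = {F\<in>A. x \<in> F} \<union> {F\<in>A. x \<notin> F}" by blast
  then have "card A = card ({F\<in>A. x \<in> F} \<union> {F\<in>A. x \<notin> F})" by simp
  also have "\<dots> = card {F\<in>A. x \<in> F} + card {F\<in>A. x \<notin> F}"
    using assms by (intro card_Un_disjoint) auto
  finally show ?thesis .
qed

lemma k3_ge: "(k::nat) \<ge> 5 \<Longrightarrow> k ^ 3 \<ge> 2 * k + 2 + k"
proof -
  assume k: "k \<ge> 5"
  have "k ^ 3 = k * (k * k)" by (simp add: power3_eq_cube)
  also have "k * (k * k) \<ge> 5 * (5 * k)" using k by (intro mult_mono) auto
  finally show ?thesis using k by linarith
qed

lemma nums:
  fixes n k :: nat
  assumes k: "k \<ge> 5" and n: "n \<ge> k ^ 3"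
  defines "c \<equiv> ((n - 2) choose (k - 2))" and "d \<equiv> ((n - 3) choose (k - 3))" and "X \<equiv> Mt n k (2 * k - 1)"
  shows "real c \<ge> (real k ^ 2 + 2 * real k + 4) * real d"
    and "real d \<ge> 1"
    and "2 * real X + (2 * real k - 1) * (2 * real k - 2) * real d \<ge> 2 * (2 * real k - 1) * real c"
    and "2 * Mt n k (k - 1) + 2 * d \<le> X"
    and "Mt n k (2 * k - 2) + 4 * d \<le> X"
proof -
  have nk: "n \<ge> 2 * k + 2 + k" using k3_ge[OF k] n by linarith
  have ab: "(k - 2) * c = (n - 2) * d" unfolding c_def d_def by (rule absorb) (use k nk in auto)
  have abr: "(real k - 2) * real c = (real n - 2) * real d"
  proof -
    have "real ((k - 2) * c) = real ((n - 2) * d)" using ab by simp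
    then show ?thesis using k nk by (simp add: of_nat_diff)
  qed
  have nr: "real n \<ge> real k ^ 3" using n by (metis of_nat_le_iff of_nat_power)
  show cg: "real c \<ge> (real k ^ 2 + 2 * real k + 4) * real d"
    by (rule num_gamma[OF _ nr abr]) (use k in auto)
  have d1: "d \<ge> 1" unfolding d_def using k nk by (simp add: Suc_le_eq)
  then show "real d \<ge> 1" by simp
  have MLw: "2 * (2 * k - 1) * c \<le> 2 * X + (2 * k - 1) * (2 * k - 1 - 1) * d"
    unfolding c_def d_def X_def by (rule Mt_lower) (use k nk in auto)
  then have "real (2 * (2 * k - 1) * c) \<le> real (2 * X + (2 * k - 1) * (2 * k - 1 - 1) * d)" by linarith
  then show "2 * real X + (2 * real k - 1) * (2 * real k - 2) * real d \<ge> 2 * (2 * real k - 1) * real c"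
    using k by (simp add: of_nat_diff)
  have MD: "2 * Mt n k (k - 1) + c \<le> X + (k * k - 1) * d"
    unfolding c_def d_def X_def by (rule Mt_double) (use k nk in auto)
  have cg2: "c \<ge> (k * k + 2 * k + 4) * d"
  proof -
    have "real ((k * k + 2 * k + 4) * d) \<le> real c" using cg by (simp add: power2_eq_square)
    then show ?thesis by linarith
  qed
  have kk1: "k * k \<ge> 1" using k by simp
  have kk2: "k * k + 2 * k + 4 = (k * k - 1) + (2 * k + 5)" using kk1 by linarith
  have "(k * k + 2 * k + 4) * d = (k * k - 1) * d + (2 * k + 5) * d" unfolding kk2 by (rule add_mult_distrib)
  then show "2 * Mt n k (k - 1) + 2 * d \<le> X" using MD cg2 d1 by (simp add: algebra_simps)
  have XS: "X = Mt n k (2 * k - 2) + ((n - 2 - (2 * k - 2)) choose (k - 2))"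
    unfolding X_def using Mt_Suc[of n k "2 * k - 2"] k by (simp add: Suc_diff_Suc numeral_2_eq_2)
  have gl: "c \<le> ((n - 2 - (0 + (2 * k - 2))) choose (k - 2)) + (2 * k - 2) * d"
    unfolding c_def d_def using g_lb[of 0 "2 * k - 2" n k] k nk by simp
  have "(k * k + 2 * k + 4) * d \<ge> (2 * k - 2) * d + 4 * d"
  proof -
    have "k * k + 2 * k + 4 \<ge> (2 * k - 2) + 4" by simp
    then show ?thesis by (metis add_mult_distrib mult_le_mono1)
  qed
  then show "Mt n k (2 * k - 2) + 4 * d \<le> X" using XS gl cg2 by simp
qed

lemma cross_sym: "cross_intersecting A B \<Longrightarrow> cross_intersecting B A"
  unfolding cross_intersecting_def by blast

lemma sub_cov:
  assumes "B \<subseteq> ksets n k" "cross_intersecting A B"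
  shows "{F\<in>B. x \<in> F} \<subseteq> cov n k x {F\<in>A. x \<notin> F}"
  using assms unfolding cov_def cross_intersecting_def by blast

lemma sum_bound:
  assumes A: "A \<subseteq> ksets n k" and B: "B \<subseteq> ksets n k" and AB: "A \<inter> B = {}"
    and ci: "cross_intersecting A B" and x: "x \<in> {1..n}" and k: "k \<ge> 3"
    and P: "{F\<in>A. x \<notin> F} \<noteq> {}" and Q: "{F\<in>B. x \<notin> F} \<noteq> {}"
  shows "card {F\<in>A. x \<in> F} + card {F\<in>B. x \<in> F} \<le>
     Mt n k (card (\<Inter>{F\<in>A. x \<notin> F} \<union> \<Inter>{F\<in>B. x \<notin> F}))
     + (k - card (\<Inter>{F\<in>A. x \<notin> F})) * (k - card (\<Inter>{F\<in>A. x \<notin> F})) * ((n - 3) choose (k - 3))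
     + (k - card (\<Inter>{F\<in>B. x \<notin> F})) * (k - card (\<Inter>{F\<in>B. x \<notin> F})) * ((n - 3) choose (k - 3))"
proof -
  let ?P = "{F\<in>A. x \<notin> F}" and ?Q = "{F\<in>B. x \<notin> F}"
  let ?R = "\<Inter>?P" and ?S = "\<Inter>?Q"
  obtain EP where EP: "cov n k x ?P \<subseteq> meets n k x ?R \<union> EP" "finite EP"
     "card EP \<le> (k - card ?R) * (k - card ?R) * ((n - 3) choose (k - 3))"
    using E_bound[of ?P n k x] P A x k by blast
  obtain EQ where EQ: "cov n k x ?Q \<subseteq> meets n k x ?S \<union> EQ" "finite EQ"
     "card EQ \<le> (k - card ?S) * (k - card ?S) * ((n - 3) choose (k - 3))"
    using E_bound[of ?Q n k x] Q B x k by blast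
  have s1: "{F\<in>B. x \<in> F} \<subseteq> cov n k x ?P" using sub_cov[OF B ci] .
  have s2: "{F\<in>A. x \<in> F} \<subseteq> cov n k x ?Q" using sub_cov[OF A cross_sym[OF ci]] .
  have mm: "meets n k x ?R \<union> meets n k x ?S = meets n k x (?R \<union> ?S)" unfolding meets_def by blast
  have sub: "{F\<in>A. x \<in> F} \<union> {F\<in>B. x \<in> F} \<subseteq> meets n k x (?R \<union> ?S) \<union> EP \<union> EQ"
    using s1 s2 EP(1) EQ(1) mm by blast
  have fm: "finite (meets n k x (?R \<union> ?S))" unfolding meets_def by (auto intro: finite_subset[OF _ finite_ksets])
  have RS: "?R \<union> ?S \<subseteq> {1..n}"
  proof -
    obtain P1 where "P1 \<in> ?P" using P by blast
    moreover obtain Q1 where "Q1 \<in> ?Q" using Q by blast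
    ultimately show ?thesis using A B ksetsD by blast
  qed
  have xRS: "x \<notin> ?R \<union> ?S" using P Q by blast
  have "card {F\<in>A. x \<in> F} + card {F\<in>B. x \<in> F} = card ({F\<in>A. x \<in> F} \<union> {F\<in>B. x \<in> F})"
    using AB A B by (intro card_Un_disjoint[symmetric]) (auto intro: finite_subset[OF _ finite_ksets])
  also have "\<dots> \<le> card (meets n k x (?R \<union> ?S) \<union> EP \<union> EQ)"
    using sub fm EP(2) EQ(2) by (intro card_mono) auto
  also have "\<dots> \<le> card (meets n k x (?R \<union> ?S)) + card EP + card EQ"
    by (meson add_mono card_Un_le order_trans le_refl)
  also have "card (meets n k x (?R \<union> ?S)) = Mt n k (card (?R \<union> ?S))"
    using card_meets[OF RS x xRS] k by simp
  finally show ?thesis using EP(3) EQ(3) by linarith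
qed


lemma step4:
  fixes n k x h :: nat
  assumes k: "k \<ge> 5" and n: "n \<ge> k ^ 3"
    and A: "A \<subseteq> ksets n k" and B: "B \<subseteq> ksets n k" and AB: "A \<inter> B = {}"
    and ci: "cross_intersecting A B" and x: "x \<in> {1..n}"
    and P: "{F\<in>A. x \<notin> F} \<noteq> {}" and Q: "{F\<in>B. x \<notin> F} \<noteq> {}"
    and Bx: "card {F\<in>B. x \<in> F} > ((n - 2) choose (k - 2)) + k * k * ((n - 3) choose (k - 3))"
    and h: "Mt n k (2 * k - 1) + 3 \<le> 2 * h" "card A \<ge> h" "card B \<ge> h"
    and rs: "card (\<Inter>{F\<in>A. x \<notin> F}) \<le> card (\<Inter>{F\<in>B. x \<notin> F})"
  shows False
proof -
  define P' where "P' = {F\<in>A. x \<notin> F}"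
  define Q' where "Q' = {F\<in>B. x \<notin> F}"
  define R where "R = \<Inter>P'"
  define S where "S = \<Inter>Q'"
  define r where "r = card R"
  define s where "s = card S"
  define c where "c = ((n - 2) choose (k - 2))"
  define d where "d = ((n - 3) choose (k - 3))"
  define X where "X = Mt n k (2 * k - 1)"
  note defs = P'_def Q'_def R_def S_def r_def s_def c_def d_def X_def
  have nk: "n \<ge> 2 * k + 2 + k" using k3_ge[OF k] n by linarith
  have N: "real c \<ge> (real k ^ 2 + 2 * real k + 4) * real d" "real d \<ge> 1"
    "2 * real X + (2 * real k - 1) * (2 * real k - 2) * real d \<ge> 2 * (2 * real k - 1) * real c"
    "2 * Mt n k (k - 1) + 2 * d \<le> X" "Mt n k (2 * k - 2) + 4 * d \<le> X"
    using nums[OF k n] unfolding defs by auto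
  have hr: "real X + 3 \<le> 2 * real h" using h(1) unfolding X_def by linarith
  have fA: "finite A" and fB: "finite B" using A B finite_sub_ksets by auto
  have cA: "card A = card {F\<in>A. x \<in> F} + card P'" unfolding P'_def by (rule card_split[OF fA])
  have cB: "card B = card {F\<in>B. x \<in> F} + card Q'" unfolding Q'_def by (rule card_split[OF fB])
  have P'ne: "P' \<noteq> {}" "P' \<subseteq> ksets n k" "\<forall>F\<in>P'. x \<notin> F" using P A unfolding P'_def by auto
  have Q'ne: "Q' \<noteq> {}" "Q' \<subseteq> ksets n k" "\<forall>F\<in>Q'. x \<notin> F" using Q B unfolding Q'_def by auto
  have rk: "r \<le> k" unfolding r_def R_def by (rule core_le_k[OF P'ne(1,2)])
  have sk: "s \<le> k" unfolding s_def S_def by (rule core_le_k[OF Q'ne(1,2)])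
  have rs': "r \<le> s" using rs unfolding defs .
  have covP: "card {F\<in>B. x \<in> F} \<le> Mt n k r + (k - r) * (k - r) * d"
  proof -
    have "card {F\<in>B. x \<in> F} \<le> card (cov n k x P')"
      unfolding P'_def by (rule card_mono[OF _ sub_cov[OF B ci]]) (auto simp: cov_def intro: finite_subset[OF _ finite_ksets])
    also have "\<dots> \<le> Mt n k r + (k - r) * (k - r) * d"
      unfolding r_def R_def d_def using card_cov[OF P'ne x] k by simp
    finally show ?thesis .
  qed
  have cardP: "card P' \<le> ((n - r - 1) choose (k - r))" unfolding r_def R_def using core_card[OF P'ne x] .
  have cardQ: "card Q' \<le> ((n - s - 1) choose (k - s))" unfolding s_def S_def using core_card[OF Q'ne x] .
  have r2: "r \<ge> 2"
  proof (rule ccontr)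
    assume "\<not> r \<ge> 2"
    then have r1: "r \<le> 1" by simp
    have "Mt n k r \<le> Mt n k 1" using r1 by (rule Mt_mono)
    also have "Mt n k 1 = c" unfolding Mt_def c_def by simp
    finally have m: "Mt n k r \<le> c" .
    have "(k - r) * (k - r) \<le> k * k" by (intro mult_le_mono) auto
    then have "(k - r) * (k - r) * d \<le> k * k * d" by (rule mult_le_mono1)
    then show False using covP m Bx unfolding c_def d_def by linarith
  qed
  have s2: "s \<ge> 2" using r2 rs' by linarith
  have Qc: "card Q' \<le> c" using cardQ core_c[OF s2 sk, of n] nk unfolding c_def by linarith
  show False
  proof (cases "r = 2")
    case True
    have "card {F\<in>B. x \<in> F} \<le> 2 * c + (k - 2) * (k - 2) * d"
      using covP Mt_le[of n k 2] True unfolding c_def by simp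
    then have "card B \<le> 3 * c + (k - 2) * (k - 2) * d" using cB Qc by linarith
    then have "real (card B) \<le> real (3 * c + (k - 2) * (k - 2) * d)" by linarith
    also have "\<dots> = 3 * real c + (real k - 2)^2 * real d" using k by (simp add: of_nat_diff power2_eq_square)
    also have "\<dots> < real h" using numIb[where c="real c" and d="real d" and X="real X" and h="real h" and k="real k"] N hr k by simp
    finally show False using h(3) by linarith
  next
    case False
    then have r3: "r \<ge> 3" using r2 by simp
    have Qd: "card Q' \<le> d" using cardQ core_d[of s k n] r3 rs' sk nk unfolding d_def by linarith
    have Pd: "card P' \<le> d" using cardP core_d[of r k n] r3 rk nk unfolding d_def by linarith
    show False
    proof (cases "r \<le> k - 2")
      case True
      have "card {F\<in>B. x \<in> F} \<le> r * c + (k - r) * (k - r) * d"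
        using covP Mt_le[of n k r] unfolding c_def by simp
      then have "card B \<le> r * c + (k - r) * (k - r) * d + d" using cB Qd by linarith
      then have "real (card B) \<le> real (r * c + (k - r) * (k - r) * d + d)" by linarith
      also have "\<dots> = (real k - real (k - r)) * real c + (real (k - r))^2 * real d + real d"
        using rk by (simp add: of_nat_diff power2_eq_square)
      also have "\<dots> < real h"
        using numIc[where c="real c" and d="real d" and X="real X" and h="real h" and k="real k" and t="real (k - r)"] N hr k True by simp
      finally show False using h(3) by linarith
    next
      case False
      then have rk1: "r \<ge> k - 1" by simp
      have SB: "card {F\<in>A. x \<in> F} + card {F\<in>B. x \<in> F} \<le> Mt n k (card (R \<union> S)) + (k - r) * (k - r) * d + (k - s) * (k - s) * d"
        using sum_bound[OF A B AB ci x _ P Q] k unfolding defs by simp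
      have kr: "(k - r) * (k - r) * d \<le> d" "(k - s) * (k - s) * d \<le> d"
      proof -
        have a1: "k - r \<le> 1" "k - s \<le> 1" using rk1 rs' by linarith+
        have "(k - r) * (k - r) \<le> 1 * 1" "(k - s) * (k - s) \<le> 1 * 1" using a1 by (intro mult_le_mono; simp)+
        then show "(k - r) * (k - r) * d \<le> d" "(k - s) * (k - s) * d \<le> d"
          by (metis mult_le_mono1 mult_1)+
      qed
      have fR: "finite R"
      proof -
        obtain P1 where P1: "P1 \<in> P'" using P'ne by blast
        then have "R \<subseteq> P1" unfolding R_def by blast
        then show ?thesis using P1 P'ne(2) ksetsD[of P1 n k] finite_subset by blast
      qed
      have fS: "finite S"
      proof -
        obtain Q1 where Q1: "Q1 \<in> Q'" using Q'ne by blast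
        then have "S \<subseteq> Q1" unfolding S_def by blast
        then show ?thesis using Q1 Q'ne(2) ksetsD[of Q1 n k] finite_subset by blast
      qed
      have cRS: "card (R \<union> S) \<le> r + s" unfolding r_def s_def by (rule card_Un_le)
      show False
      proof (cases "card (R \<union> S) \<le> 2 * k - 2")
        case True
        have "Mt n k (card (R \<union> S)) \<le> Mt n k (2 * k - 2)" using True by (rule Mt_mono)
        then have "card A + card B \<le> X + 2 * d - 2 * d" using SB kr cA cB Pd Qd N(5) by linarith
        then show False using h X_def by linarith
      next
        case False
        show False
        proof (cases "r = k")
          case True
          then have sk': "s = k" using rs' sk by simp
          obtain P1 where P1: "P1 \<in> P'" using P'ne by blast
          obtain Q1 where Q1: "Q1 \<in> Q'" using Q'ne by blast
          have RP: "R \<subseteq> P1" "finite P1" "card P1 = k" using P1 P'ne ksetsD[of P1 n k] unfolding R_def by blast+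
          have "R = P1" using card_subset_eq[OF RP(2,1)] RP(3) True unfolding r_def by simp
          moreover have SQ: "S \<subseteq> Q1" "finite Q1" "card Q1 = k" using Q1 Q'ne ksetsD[of Q1 n k] unfolding S_def by blast+
          have "S = Q1" using card_subset_eq[OF SQ(2,1)] SQ(3) sk' unfolding s_def by simp
          moreover have "P1 \<inter> Q1 \<noteq> {}" using P1 Q1 ci unfolding P'_def Q'_def cross_intersecting_def by blast
          ultimately have "card (R \<inter> S) \<ge> 1" using fR fS by (simp add: Suc_le_eq card_gt_0_iff)
          then have "card (R \<union> S) \<le> 2 * k - 1" using card_Un_Int[OF fR fS] True sk' unfolding r_def s_def by linarith
          then have "Mt n k (card (R \<union> S)) \<le> X" unfolding X_def by (rule Mt_mono)
          moreover have "card P' \<le> 1" "card Q' \<le> 1" using cardP cardQ True sk' by auto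
          moreover have "(k - r) * (k - r) * d = 0" "(k - s) * (k - s) * d = 0" using True sk' by auto
          ultimately have "card A + card B \<le> X + 2" using SB cA cB by linarith
          then show False using h X_def by linarith
        next
          case False
          then have rr: "r = k - 1" using rk1 rk by linarith
          have sk': "s = k" using cRS \<open>\<not> card (R \<union> S) \<le> 2 * k - 2\<close> rr sk k by linarith
          have "card Q' \<le> 1" using cardQ sk' by simp
          moreover have "card {F\<in>B. x \<in> F} \<le> Mt n k (k - 1) + d" using covP rr k by simp
          ultimately have "card B \<le> Mt n k (k - 1) + d + 1" using cB by linarith
          then show False using N(4) h X_def by linarith
        qed
      qed
    qed
  qed
qed

lemma nonstar:
  assumes F: "F \<subseteq> ksets n k" and ns: "\<not> is_star n F" and n: "n \<ge> 1"
  shows "F \<noteq> {}" "\<exists>G\<in>F. y \<notin> G"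
proof -
  show ne: "F \<noteq> {}"
  proof
    assume "F = {}"
    then have "is_star n F" unfolding is_star_def using n by auto
    then show False using ns by simp
  qed
  show "\<exists>G\<in>F. y \<notin> G"
  proof (cases "y \<in> {1..n}")
    case True
    then show ?thesis using ns unfolding is_star_def by blast
  next
    case False
    obtain G where "G \<in> F" using ne by blast
    then show ?thesis using F ksetsD[of G n k] False by blast
  qed
qed

lemma upper:
  fixes n k :: nat
  assumes k: "k \<ge> 5" and n: "n \<ge> k ^ 3"
    and A: "A \<subseteq> ksets n k" and B: "B \<subseteq> ksets n k" and AB: "A \<inter> B = {}"
    and ci: "cross_intersecting A B" and nsA: "\<not> is_star n A" and nsB: "\<not> is_star n B"
  shows "2 * min (card A) (card B) \<le> Mt n k (2 * k - 1) + 2"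
proof (rule ccontr)
  assume neg: "\<not> 2 * min (card A) (card B) \<le> Mt n k (2 * k - 1) + 2"
  define h where "h = min (card A) (card B)"
  define c where "c = ((n - 2) choose (k - 2))"
  define d where "d = ((n - 3) choose (k - 3))"
  define X where "X = Mt n k (2 * k - 1)"
  have hX: "X + 3 \<le> 2 * h" using neg unfolding h_def X_def by linarith
  have hA: "card A \<ge> h" and hB: "card B \<ge> h" unfolding h_def by auto
  have nk: "n \<ge> 2 * k + 2 + k" using k3_ge[OF k] n by linarith
  have n1: "n \<ge> 1" using nk by linarith
  have N: "real c \<ge> (real k ^ 2 + 2 * real k + 4) * real d" "real d \<ge> 1"
    "2 * real X + (2 * real k - 1) * (2 * real k - 2) * real d \<ge> 2 * (2 * real k - 1) * real c"
    using nums[OF k n] unfolding c_def d_def X_def by auto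
  have hr: "real X + 3 \<le> 2 * real h" using hX by linarith
  have fA: "finite A" and fB: "finite B" using A B finite_sub_ksets by auto
  have Ane: "A \<noteq> {}" using nonstar[OF A nsA n1] by blast
  have Bne: "B \<noteq> {}" using nonstar[OF B nsB n1] by blast
  have lam: "2 * (real c + real k ^ 2 * real d) < real h"
    using numI2[where c="real c" and d="real d" and X="real X" and h="real h" and k="real k"] N hr k by simp
  have lam': "2 * (c + k * k * d) < h"
  proof -
    have "real (2 * (c + k * k * d)) = 2 * (real c + real k ^ 2 * real d)" by (simp add: power2_eq_square)
    then show ?thesis using lam by linarith
  qed
  have cover: "\<exists>a b. \<forall>F\<in>A. a \<in> F \<or> b \<in> F"
  proof (rule ccontr)
    assume "\<not> ?thesis"
    then have nc: "\<forall>a b. \<exists>F\<in>A. a \<notin> F \<and> b \<notin> F" by blast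
    have "card B \<le> k * k * k * d" unfolding d_def using tau3[OF A Ane nc B ci] k by simp
    then have "real (card B) \<le> real k ^ 3 * real d" by (simp add: power3_eq_cube) (metis of_nat_le_iff of_nat_mult)
    moreover have "real k ^ 3 * real d < real h"
      using numI1[where c="real c" and d="real d" and X="real X" and h="real h" and k="real k"] N hr k by simp
    ultimately show False using hB by linarith
  qed
  then obtain a b where ab: "\<forall>F\<in>A. a \<in> F \<or> b \<in> F" by blast
  have "card A \<le> card {F\<in>A. a \<in> F} + card {F\<in>A. b \<in> F}"
  proof -
    have "A = {F\<in>A. a \<in> F} \<union> {F\<in>A. b \<in> F}" using ab by blast
    then have "card A = card ({F\<in>A. a \<in> F} \<union> {F\<in>A. b \<in> F})" by simp
    also have "\<dots> \<le> card {F\<in>A. a \<in> F} + card {F\<in>A. b \<in> F}" by (rule card_Un_le)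
    finally show ?thesis .
  qed
  then have "\<exists>x. card A \<le> 2 * card {F\<in>A. x \<in> F}"
  proof (cases "card {F\<in>A. a \<in> F} \<le> card {F\<in>A. b \<in> F}")
    case True
    then show ?thesis using \<open>card A \<le> _\<close> by (intro exI[of _ b]) linarith
  next
    case False
    then show ?thesis using \<open>card A \<le> _\<close> by (intro exI[of _ a]) linarith
  qed
  then obtain x where x2: "card A \<le> 2 * card {F\<in>A. x \<in> F}" by blast
  have Ax: "card {F\<in>A. x \<in> F} > c + k * k * d"
  proof -
    define L where "L = c + k * k * d"
    have "2 * L < h" using lam' unfolding L_def .
    then have "L < card {F\<in>A. x \<in> F}" using x2 hA by linarith
    then show ?thesis unfolding L_def .
  qed
  have "{F\<in>A. x \<in> F} \<noteq> {}"
  proof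
    assume e: "{F\<in>A. x \<in> F} = {}"
    have "card {F\<in>A. x \<in> F} = 0" unfolding e by simp
    then show False using Ax by linarith
  qed
  then obtain F0 where F0: "F0 \<in> A" "x \<in> F0" by blast
  have x: "x \<in> {1..n}" using F0 A ksetsD by blast
  have P: "{F\<in>A. x \<notin> F} \<noteq> {}" using nonstar(2)[OF A nsA n1, of x] by blast
  have Q: "{F\<in>B. x \<notin> F} \<noteq> {}" using nonstar(2)[OF B nsB n1, of x] by blast
  have Q'ne: "{F\<in>B. x \<notin> F} \<noteq> {}" "{F\<in>B. x \<notin> F} \<subseteq> ksets n k" "\<forall>F\<in>{F\<in>B. x \<notin> F}. x \<notin> F"
    using Q B by auto
  have Bx: "card {F\<in>B. x \<in> F} > c + k * k * d"
  proof (rule ccontr)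
    assume Bs: "\<not> ?thesis"
    define s where "s = card (\<Inter>{F\<in>B. x \<notin> F})"
    have "card {F\<in>A. x \<in> F} \<le> card (cov n k x {F\<in>B. x \<notin> F})"
      by (rule card_mono[OF _ sub_cov[OF A cross_sym[OF ci]]]) (auto simp: cov_def intro: finite_subset[OF _ finite_ksets])
    also have "\<dots> \<le> Mt n k s + (k - s) * (k - s) * d"
      unfolding s_def d_def using card_cov[OF Q'ne x] k by simp
    finally have cs: "card {F\<in>A. x \<in> F} \<le> Mt n k s + (k - s) * (k - s) * d" .
    have s2: "s \<ge> 2"
    proof (rule ccontr)
      assume "\<not> s \<ge> 2"
      then have s1: "s \<le> 1" by simp
      have "Mt n k s \<le> Mt n k 1" using s1 by (rule Mt_mono)
      also have "Mt n k 1 = c" unfolding Mt_def c_def by simp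
      finally have m: "Mt n k s \<le> c" .
      have "(k - s) * (k - s) \<le> k * k" by (intro mult_le_mono) auto
      then have "(k - s) * (k - s) * d \<le> k * k * d" by (rule mult_le_mono1)
      then show False using cs m Ax by linarith
    qed
    have sk: "s \<le> k" unfolding s_def by (rule core_le_k[OF Q'ne(1,2)])
    have "card {F\<in>B. x \<notin> F} \<le> ((n - s - 1) choose (k - s))" unfolding s_def using core_card[OF Q'ne x] .
    then have "card {F\<in>B. x \<notin> F} \<le> c" using core_c[OF s2 sk, of n] nk unfolding c_def by linarith
    moreover have "card B = card {F\<in>B. x \<in> F} + card {F\<in>B. x \<notin> F}" by (rule card_split[OF fB])
    moreover define L where "L = c + k * k * d"
    moreover have "c \<le> L" unfolding L_def by simp
    moreover have "\<not> L < card {F\<in>B. x \<in> F}" using Bs unfolding L_def .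
    moreover have "2 * L < h" using lam' unfolding L_def .
    ultimately show False using hB by linarith
  qed
  show False
  proof (cases "card (\<Inter>{F\<in>A. x \<notin> F}) \<le> card (\<Inter>{F\<in>B. x \<notin> F})")
    case True
    show False
      by (rule step4[OF k n A B AB ci x P Q _ _ hA hB True]) (use Bx hX in \<open>auto simp: c_def d_def X_def\<close>)
  next
    case False
    have AB': "B \<inter> A = {}" using AB by blast
    show False
      by (rule step4[OF k n B A AB' cross_sym[OF ci] x Q P _ _ hB hA]) (use Ax hX False in \<open>auto simp: c_def d_def X_def\<close>)
  qed
qed

lemma construction:
  fixes n k :: nat
  assumes k: "k \<ge> 5" and n: "n \<ge> k ^ 3"
  shows "\<exists>A B. A \<subseteq> ksets n k \<and> B \<subseteq> ksets n k \<and> A \<inter> B = {} \<and>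
      cross_intersecting A B \<and> \<not> is_star n A \<and> \<not> is_star n B \<and>
      min (card A) (card B) = Mt n k (2 * k - 1) div 2 + 1"
proof -
  have nk: "n \<ge> 2 * k + 2 + k" using k3_ge[OF k] n by linarith
  define T1 where "T1 = {2..k+1}"
  define T2 where "T2 = {k+1..2*k}"
  define W where "W = T1 \<union> T2"
  have W: "W = {2..2*k}" unfolding W_def T1_def T2_def by auto
  define XX where "XX = meets n k 1 W"
  define X1 where "X1 = {S\<in>XX. S \<inter> T2 = {}}"
  define X2 where "X2 = {S\<in>XX. S \<inter> T1 = {}}"
  define X12 where "X12 = {S\<in>XX. S \<inter> T1 \<noteq> {} \<and> S \<inter> T2 \<noteq> {}}"
  define X where "X = Mt n k (2 * k - 1)"
  have fXX: "finite XX" unfolding XX_def meets_def by (auto intro: finite_subset[OF _ finite_ksets])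
  have cXX: "card XX = X" unfolding XX_def X_def using card_meets[of W n 1 k] W nk k by simp
  have cT: "card T1 = k" "card T2 = k" unfolding T1_def T2_def by auto
  have sub1: "meets n k 1 T2 \<subseteq> XX" unfolding XX_def meets_def W_def by blast
  have sub2: "meets n k 1 T1 \<subseteq> XX" unfolding XX_def meets_def W_def by blast
  have e1: "XX = X1 \<union> meets n k 1 T2" unfolding X1_def XX_def meets_def W_def by blast
  have e2: "XX = X2 \<union> meets n k 1 T1" unfolding X2_def XX_def meets_def W_def by blast
  have cm1: "card (meets n k 1 T2) = Mt n k k" using card_meets[of T2 n 1 k] cT k nk unfolding T2_def by simp
  have cm2: "card (meets n k 1 T1) = Mt n k k" using card_meets[of T1 n 1 k] cT k nk unfolding T1_def by simp
  have fX1: "finite X1" "finite X2" "finite X12" using fXX unfolding X1_def X2_def X12_def by auto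
  have fm: "finite (meets n k 1 T2)" "finite (meets n k 1 T1)" using sub1 sub2 fXX finite_subset by blast+
  have dj1: "X1 \<inter> meets n k 1 T2 = {}" unfolding X1_def meets_def by blast
  have dj2: "X2 \<inter> meets n k 1 T1 = {}" unfolding X2_def meets_def by blast
  have c1: "card X1 + Mt n k k = X"
    using card_Un_disjoint[OF fX1(1) fm(1) dj1] e1 cXX cm1 by simp
  have c2: "card X2 + Mt n k k = X"
    using card_Un_disjoint[OF fX1(2) fm(2) dj2] e2 cXX cm2 by simp
  have e3: "XX = X1 \<union> X2 \<union> X12" unfolding X1_def X2_def X12_def XX_def meets_def W_def by blast
  have c3: "card X1 + card X2 + card X12 = X"
  proof -
    have d1: "X1 \<inter> X2 = {}" unfolding X1_def X2_def XX_def meets_def W_def by blast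
    have d2: "(X1 \<union> X2) \<inter> X12 = {}" unfolding X1_def X2_def X12_def by blast
    have "card XX = card (X1 \<union> X2) + card X12" unfolding e3 using fX1 d2 by (simp add: card_Un_disjoint)
    also have "card (X1 \<union> X2) = card X1 + card X2" using fX1 d1 by (simp add: card_Un_disjoint)
    finally show ?thesis using cXX by simp
  qed
  have c12: "card X1 = card X2" using c1 c2 by simp
  obtain H where H: "H \<subseteq> X12" "card H = card X12 div 2" "finite H"
    using obtain_subset_with_card_n[of "card X12 div 2" X12] by auto
  define A where "A = insert T2 (X1 \<union> H)"
  define B where "B = insert T1 (X2 \<union> (X12 - H))"
  have XXk: "XX \<subseteq> ksets n k" unfolding XX_def meets_def by blast
  have T1k: "T1 \<in> ksets n k" unfolding ksets_def T1_def using nk by auto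
  have T2k: "T2 \<in> ksets n k" unfolding ksets_def T2_def using nk by auto
  have Ak: "A \<subseteq> ksets n k" unfolding A_def using XXk T2k H(1) unfolding X1_def X12_def by blast
  have Bk: "B \<subseteq> ksets n k" unfolding B_def using XXk T1k unfolding X2_def X12_def by blast
  have oneXX: "\<forall>S\<in>XX. 1 \<in> S" unfolding XX_def meets_def by blast
  have T2nXX: "T2 \<notin> XX" "T1 \<notin> XX" using oneXX unfolding T1_def T2_def by auto
  have T12: "T1 \<noteq> T2"
  proof -
    have "(2::nat) \<in> T1" "(2::nat) \<notin> T2" unfolding T1_def T2_def using k by auto
    then show ?thesis by blast
  qed
  have AB: "A \<inter> B = {}"
  proof -
    have "X1 \<inter> X2 = {}" unfolding X1_def X2_def XX_def meets_def W_def by blast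
    moreover have "X1 \<inter> X12 = {}" "X2 \<inter> X12 = {}" unfolding X1_def X2_def X12_def by blast+
    moreover have "T2 \<notin> X2 \<union> (X12 - H)" "T1 \<notin> X1 \<union> H" using T2nXX H(1) unfolding X1_def X2_def X12_def by blast+
    ultimately show ?thesis unfolding A_def B_def using T12 H(1) by blast
  qed
  have ci: "cross_intersecting A B"
    unfolding cross_intersecting_def
  proof (intro ballI)
    fix F G assume F: "F \<in> A" and G: "G \<in> B"
    show "F \<inter> G \<noteq> {}"
    proof (cases "F = T2")
      case True
      show ?thesis
      proof (cases "G = T1")
        case True
        have "k + 1 \<in> T1" "k + 1 \<in> T2" unfolding T1_def T2_def using k by auto
        then show ?thesis using \<open>F = T2\<close> True by blast
      next
        case False
        then have "G \<in> X2 \<union> X12" using G unfolding B_def by blast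
        then have "G \<inter> T2 \<noteq> {}" unfolding X2_def X12_def XX_def meets_def W_def by blast
        then show ?thesis using True by blast
      qed
    next
      case False
      then have F1: "F \<in> X1 \<union> X12" using F H(1) unfolding A_def by blast
      show ?thesis
      proof (cases "G = T1")
        case True
        have "F \<inter> T1 \<noteq> {}" using F1 unfolding X1_def X12_def XX_def meets_def W_def by blast
        then show ?thesis using True by blast
      next
        case False
        then have "G \<in> XX" using G unfolding B_def X2_def X12_def by blast
        moreover have "F \<in> XX" using F1 unfolding X1_def X12_def by blast
        ultimately show ?thesis using oneXX by blast
      qed
    qed
  qed
  define Z where "Z = {2*k+1..3*k-2}"
  have cZ: "card Z = k - 2" unfolding Z_def using k by simp
  have fZ: "finite Z" unfolding Z_def by simp
  define S1 where "S1 = insert 1 (insert 2 Z)"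
  define S2 where "S2 = insert 1 (insert (2*k) Z)"
  have S1k: "S1 \<in> ksets n k"
  proof -
    have "1 \<notin> insert 2 Z" "2 \<notin> Z" unfolding Z_def by auto
    then have "card S1 = k" unfolding S1_def using cZ fZ k by simp
    moreover have "S1 \<subseteq> {1..n}" unfolding S1_def Z_def using nk k by auto
    ultimately show ?thesis unfolding ksets_def by blast
  qed
  have S2k: "S2 \<in> ksets n k"
  proof -
    have "1 \<notin> insert (2*k) Z" "2*k \<notin> Z" unfolding Z_def using k by auto
    then have "card S2 = k" unfolding S2_def using cZ fZ k by simp
    moreover have "S2 \<subseteq> {1..n}" unfolding S2_def Z_def using nk k by auto
    ultimately show ?thesis unfolding ksets_def by blast
  qed
  have S1X: "S1 \<in> X1"
  proof -
    have "S1 \<inter> W \<noteq> {}" unfolding S1_def W using k by auto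
    moreover have "S1 \<inter> T2 = {}" unfolding S1_def T2_def Z_def using k by auto
    ultimately show ?thesis unfolding X1_def XX_def meets_def using S1k unfolding S1_def by blast
  qed
  have S2X: "S2 \<in> X2"
  proof -
    have "S2 \<inter> W \<noteq> {}" unfolding S2_def W using k by auto
    moreover have "S2 \<inter> T1 = {}" unfolding S2_def T1_def Z_def using k by auto
    ultimately show ?thesis unfolding X2_def XX_def meets_def using S2k unfolding S2_def by blast
  qed
  have nsA: "\<not> is_star n A"
    unfolding is_star_def
  proof
    assume "\<exists>y\<in>{1..n}. \<forall>F\<in>A. y \<in> F"
    then obtain y where y: "\<forall>F\<in>A. y \<in> F" by blast
    have "y \<in> T2" using y unfolding A_def by blast
    moreover have "y \<in> S1" using y S1X unfolding A_def by blast
    ultimately show False unfolding T2_def S1_def Z_def using k by auto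
  qed
  have nsB: "\<not> is_star n B"
    unfolding is_star_def
  proof
    assume "\<exists>y\<in>{1..n}. \<forall>F\<in>B. y \<in> F"
    then obtain y where y: "\<forall>F\<in>B. y \<in> F" by blast
    have "y \<in> T1" using y unfolding B_def by blast
    moreover have "y \<in> S2" using y S2X unfolding B_def by blast
    ultimately show False unfolding T1_def S2_def Z_def using k by auto
  qed
  have cA: "card A = card X1 + card X12 div 2 + 1"
  proof -
    have "X1 \<inter> H = {}" using H(1) unfolding X1_def X12_def by blast
    then have "card (X1 \<union> H) = card X1 + card H" using fX1 H(3) by (simp add: card_Un_disjoint)
    moreover have "T2 \<notin> X1 \<union> H" using T2nXX H(1) unfolding X1_def X12_def by blast
    ultimately show ?thesis unfolding A_def using fX1 H by simp
  qed
  have cB: "card B = card X2 + (card X12 - card X12 div 2) + 1"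
  proof -
    have "X2 \<inter> (X12 - H) = {}" unfolding X2_def X12_def by blast
    moreover have "card (X12 - H) = card X12 - card X12 div 2" using H fX1 by (simp add: card_Diff_subset)
    ultimately have "card (X2 \<union> (X12 - H)) = card X2 + (card X12 - card X12 div 2)" using fX1 by (simp add: card_Un_disjoint)
    moreover have "T1 \<notin> X2 \<union> (X12 - H)" using T2nXX unfolding X2_def X12_def by blast
    ultimately show ?thesis unfolding B_def using fX1 by simp
  qed
  have "min (card A) (card B) = X div 2 + 1" using cA cB c3 c12 by simp
  then show ?thesis using Ak Bk AB ci nsA nsB unfolding X_def by blast
qed

theorem theorem5p4:
  fixes n k :: nat
  assumes "k \<ge> 5" and "n \<ge> k ^ 3"
  shows "int (f_star n k) =
    \<lfloor>(real ((n - 1) choose (n - k)) - real ((n - 2 * k) choose (k - 1))) / 2\<rfloor> + 1"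
proof -
  note k = assms(1) and n = assms(2)
  have nk: "n \<ge> 2 * k + 2 + k" using k3_ge[OF k] n by linarith
  define X where "X = Mt n k (2 * k - 1)"
  define Z where "Z = {min (card A) (card B) | A B.
      A \<subseteq> ksets n k \<and> B \<subseteq> ksets n k \<and> A \<inter> B = {} \<and>
      cross_intersecting A B \<and> \<not> is_star n A \<and> \<not> is_star n B}"
  have fZ: "finite Z"
  proof -
    have "Z \<subseteq> {..card (ksets n k)}"
    proof
      fix y assume "y \<in> Z"
      then obtain A B :: "nat set set" where "y = min (card A) (card B)" "A \<subseteq> ksets n k" unfolding Z_def by blast
      moreover have "card A \<le> card (ksets n k)" using \<open>A \<subseteq> ksets n k\<close> finite_ksets by (rule card_mono[rotated])
      ultimately show "y \<in> {..card (ksets n k)}" by simp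
    qed
    then show ?thesis using finite_subset by blast
  qed
  have ub: "y \<le> X div 2 + 1" if "y \<in> Z" for y
  proof -
    obtain A B where AB: "y = min (card A) (card B)" "A \<subseteq> ksets n k" "B \<subseteq> ksets n k" "A \<inter> B = {}"
      "cross_intersecting A B" "\<not> is_star n A" "\<not> is_star n B" using \<open>y \<in> Z\<close> unfolding Z_def by fastforce
    have "2 * y \<le> X + 2" unfolding X_def AB(1) using upper[OF k n AB(2-7)] .
    then show ?thesis by linarith
  qed
  obtain A B where C: "A \<subseteq> ksets n k" "B \<subseteq> ksets n k" "A \<inter> B = {}"
      "cross_intersecting A B" "\<not> is_star n A" "\<not> is_star n B"
      "min (card A) (card B) = X div 2 + 1" using construction[OF k n] unfolding X_def by blast
  have mem: "X div 2 + 1 \<in> Z" unfolding Z_def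
    by (rule CollectI, rule exI[of _ A], rule exI[of _ B]) (use C in simp)
  have fs: "f_star n k = X div 2 + 1" unfolding f_star_def Z_def[symmetric]
    by (rule Max_eqI[OF fZ ub mem])
  have b1: "((n - 1) choose (n - k)) = ((n - 1) choose (k - 1))"
  proof -
    have "((n - 1) choose (k - 1)) = ((n - 1) choose ((n - 1) - (k - 1)))" by (rule binomial_symmetric) (use nk in simp)
    moreover have "(n - 1) - (k - 1) = n - k" using k nk by simp
    ultimately show ?thesis by simp
  qed
  have b2: "((n - 1) choose (k - 1)) = ((n - 1 - (2 * k - 1)) choose (k - 1)) + X"
    unfolding X_def by (rule hockey) (use nk k in auto)
  have b3: "n - 1 - (2 * k - 1) = n - 2 * k" using k by simp
  have "real ((n - 1) choose (n - k)) - real ((n - 2 * k) choose (k - 1)) = real X"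
    using b1 b2 b3 by simp
  moreover have "\<lfloor>real X / 2\<rfloor> = int (X div 2)"
    using floor_divide_of_nat_eq[of X 2] by simp
  ultimately show ?thesis using fs by simp
qed


end
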